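(* For every $T_1,T_2\in\mathcal{T}_n$, if $M(T_1)=M(T_2)$, then $T_1=T_2$ (i.e., they are label-preservingly isomorphic).
   Context: A phylogenetic tree is a finite rooted tree (arcs directed away from the root) with no node of outdegree $1$, whose leaves are injectively labeled. $\mathcal{T}_n$ denotes the set of phylogenetic trees with $n$ leaves labeled $1,\dots,n$, up to label-preserving isomorphism. Internal nodes are the non-leaf nodes; $\mathcal{L}(T)$ is the set of leaves. The height of a node is the length of a longest directed path from it to a leaf. The bottom-up ordering of $T=(V,E)\in\mathcal{T}_n$ is the unique injective map $\ell:V\to\{1,\dots,|V|\}$ such that: (a) for a leaf $v$, $\ell(v)$ is its label; (b) if $\mathrm{height}(u)<\mathrm{height}(v)$ then $\ell(u)<\ell(v)$; (c) if $0<\mathrm{height}(u)=\mathrm{height}(v)$ and $\min\{\ell(x): x \text{ child of } u\}<\min\{\ell(x): x\text{ child of } v\}$ then $\ell(u)<\ell(v)$. The matching representation of $T$ is $M(T)=\{\ell(\mathrm{children}(u)) : u\in V\setminus\mathcal{L}(T)\}$, a partition of $\{1,\dots,|V|-1\}$. *)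

theory Defs
  imports Main
begin

text \<open>A phylogenetic tree is given concretely by a vertex set V, an arc set E
  (arcs directed away from the root) and a labelling lab of the vertices
  (only its values on the leaves matter).\<close>

definition children :: "('v \<times> 'v) set \<Rightarrow> 'v \<Rightarrow> 'v set" where
  "children E u = {w. (u, w) \<in> E}"

definition leaves :: "'v set \<Rightarrow> ('v \<times> 'v) set \<Rightarrow> 'v set" where
  "leaves V E = {v \<in> V. children E v = {}}"

definition rooted_tree :: "'v set \<Rightarrow> ('v \<times> 'v) set \<Rightarrow> bool" where
  "rooted_tree V E \<longleftrightarrow> finite V \<and> E \<subseteq> V \<times> V \<and>
     (\<exists>r\<in>V. (\<forall>u. (u, r) \<notin> E) \<and> (\<forall>v\<in>V - {r}. \<exists>!u. (u, v) \<in> E)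
             \<and> (\<forall>v\<in>V. (r, v) \<in> E\<^sup>*))"

definition phylo_tree :: "nat \<Rightarrow> 'v set \<Rightarrow> ('v \<times> 'v) set \<Rightarrow> ('v \<Rightarrow> nat) \<Rightarrow> bool" where
  "phylo_tree n V E lab \<longleftrightarrow> rooted_tree V E \<and>
     (\<forall>v\<in>V. card (children E v) \<noteq> 1) \<and>
     bij_betw lab (leaves V E) {1..n}"

definition phylo_iso :: "'a set \<Rightarrow> ('a \<times> 'a) set \<Rightarrow> ('a \<Rightarrow> nat) \<Rightarrow>
                         'b set \<Rightarrow> ('b \<times> 'b) set \<Rightarrow> ('b \<Rightarrow> nat) \<Rightarrow> bool" where
  "phylo_iso V1 E1 lab1 V2 E2 lab2 \<longleftrightarrow>
     (\<exists>f. bij_betw f V1 V2 \<and>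
          (\<forall>u\<in>V1. \<forall>v\<in>V1. (u, v) \<in> E1 \<longleftrightarrow> (f u, f v) \<in> E2) \<and>
          (\<forall>v\<in>leaves V1 E1. lab2 (f v) = lab1 v))"

definition height :: "'v set \<Rightarrow> ('v \<times> 'v) set \<Rightarrow> 'v \<Rightarrow> nat" where
  "height V E v = Max {k. \<exists>w\<in>leaves V E. (v, w) \<in> E ^^ k}"

text \<open>Bottom-up ordering conditions (a),(b),(c); we additionally normalise the
  map to be 0 outside V so that it is unique as a HOL function.\<close>
definition bottom_up :: "'v set \<Rightarrow> ('v \<times> 'v) set \<Rightarrow> ('v \<Rightarrow> nat) \<Rightarrow> ('v \<Rightarrow> nat) \<Rightarrow> bool" where
  "bottom_up V E lab lo \<longleftrightarrow>
     inj_on lo V \<and> lo ` V \<subseteq> {1..card V} \<and> (\<forall>v. v \<notin> V \<longrightarrow> lo v = 0) \<and>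
     (\<forall>v\<in>leaves V E. lo v = lab v) \<and>
     (\<forall>u\<in>V. \<forall>v\<in>V. height V E u < height V E v \<longrightarrow> lo u < lo v) \<and>
     (\<forall>u\<in>V. \<forall>v\<in>V. 0 < height V E u \<and> height V E u = height V E v \<and>
         Min (lo ` children E u) < Min (lo ` children E v) \<longrightarrow> lo u < lo v)"

definition bottom_up_ordering :: "'v set \<Rightarrow> ('v \<times> 'v) set \<Rightarrow> ('v \<Rightarrow> nat) \<Rightarrow> 'v \<Rightarrow> nat" where
  "bottom_up_ordering V E lab = (THE lo. bottom_up V E lab lo)"

definition matching_rep :: "'v set \<Rightarrow> ('v \<times> 'v) set \<Rightarrow> ('v \<Rightarrow> nat) \<Rightarrow> nat set set" where
  "matching_rep V E lab =
     (let lo = bottom_up_ordering V E lab in {lo ` children E u | u. u \<in> V - leaves V E})"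

end

theory Submission
  imports Defs "HOL-Library.Product_Lexorder"
begin

locale ptree =
  fixes n :: nat and V :: "'v set" and E :: "('v \<times> 'v) set" and lab :: "'v \<Rightarrow> nat"
  assumes pt: "phylo_tree n V E lab"
begin

lemma finV: "finite V" using pt unfolding phylo_tree_def rooted_tree_def by blast
lemma EV: "E \<subseteq> V \<times> V" using pt unfolding phylo_tree_def rooted_tree_def by blast
lemma labbij: "bij_betw lab (leaves V E) {1..n}" using pt unfolding phylo_tree_def by blast

definition root where "root = (SOME r. r\<in>V \<and> (\<forall>u. (u, r) \<notin> E) \<and> (\<forall>v\<in>V - {r}. \<exists>!u. (u, v) \<in> E)
             \<and> (\<forall>v\<in>V. (r, v) \<in> E\<^sup>*))"

lemma root_props: "root\<in>V \<and> (\<forall>u. (u, root) \<notin> E) \<and> (\<forall>v\<in>V - {root}. \<exists>!u. (u, v) \<in> E)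
             \<and> (\<forall>v\<in>V. (root, v) \<in> E\<^sup>*)"
proof -
  have "\<exists>r. r\<in>V \<and> (\<forall>u. (u, r) \<notin> E) \<and> (\<forall>v\<in>V - {r}. \<exists>!u. (u, v) \<in> E)
             \<and> (\<forall>v\<in>V. (r, v) \<in> E\<^sup>*)" using pt unfolding phylo_tree_def rooted_tree_def by blast
  then show ?thesis unfolding root_def by (rule someI_ex)
qed

lemma noin_root: "(u, root) \<notin> E" using root_props by blast

lemma uniq_parent: assumes "(u,c) \<in> E" "(v,c) \<in> E" shows "u = v"
proof -
  have "c \<in> V" using assms EV by blast
  moreover have "c \<noteq> root" using assms noin_root by blast
  ultimately have "\<exists>!u. (u, c) \<in> E" using root_props by blast
  then show ?thesis using assms by blast
qed

lemma children_sub: "children E u \<subseteq> V" using EV unfolding children_def by blast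
lemma fin_children: "finite (children E u)" using children_sub finV finite_subset by blast
lemma leaves_sub: "leaves V E \<subseteq> V" unfolding leaves_def by blast

lemma path_V: "(v,w) \<in> E ^^ k \<Longrightarrow> v \<in> V \<Longrightarrow> w \<in> V"
proof (induction k arbitrary: w)
  case 0 then show ?case by simp
next
  case (Suc k) then show ?case using EV by (auto elim!: relpow_Suc_E)
qed

lemma depth_unique_aux: "(root,w) \<in> E ^^ j \<Longrightarrow> (root,w) \<in> E ^^ k \<Longrightarrow> j < k \<Longrightarrow> False"
proof (induction j arbitrary: w k)
  case 0
  then obtain k' where "k = Suc k'" by (cases k) auto
  then show ?case using 0 noin_root by (auto elim!: relpow_Suc_E)
next
  case (Suc j)
  then obtain k' where k': "k = Suc k'" by (cases k) auto
  obtain x where x: "(root,x) \<in> E^^j" "(x,w) \<in> E" using Suc.prems(1) by (auto elim!: relpow_Suc_E)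
  obtain y where y: "(root,y) \<in> E^^k'" "(y,w) \<in> E" using Suc.prems(2) k' by (auto elim!: relpow_Suc_E)
  have "x = y" using uniq_parent x(2) y(2) by blast
  then show ?case using Suc.IH[of x k'] x y Suc.prems(3) k' by auto
qed

lemma depth_unique: "(root,w) \<in> E ^^ j \<Longrightarrow> (root,w) \<in> E ^^ k \<Longrightarrow> j = k"
  using depth_unique_aux[of w j k] depth_unique_aux[of w k j] by (cases "j < k"; cases "k < j") auto

lemma path_bound: "\<exists>B. \<forall>v w k. v \<in> V \<longrightarrow> (v,w) \<in> E ^^ k \<longrightarrow> k \<le> B"
proof -
  define Dep where "Dep = (\<Union>w\<in>V. {k. (root,w) \<in> E ^^ k})"
  have "finite {k. (root,w) \<in> E ^^ k}" for w
  proof (cases "\<exists>j. (root,w) \<in> E ^^ j")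
    case True
    then obtain j where "(root,w) \<in> E ^^ j" by blast
    then have "{k. (root,w) \<in> E ^^ k} \<subseteq> {j}" using depth_unique by blast
    then show ?thesis using finite_subset by blast
  qed simp
  then have fD: "finite Dep" unfolding Dep_def using finV by blast
  have "k \<le> Max Dep" if "v \<in> V" "(v,w) \<in> E ^^ k" for v w k
  proof -
    have "(root,v) \<in> E\<^sup>*" using root_props that by blast
    then obtain d where "(root,v) \<in> E ^^ d" using rtrancl_power by blast
    then have "(root,w) \<in> E ^^ (d + k)" using that relpow_add[of d k E] by blast
    moreover have "w \<in> V" using path_V that by blast
    ultimately have "d + k \<in> Dep" unfolding Dep_def by blast
    then have "d + k \<le> Max Dep" using Max_ge[OF fD] by blast
    then show ?thesis by simp
  qed
  then show ?thesis by blast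
qed

lemma reach_leaf: assumes "v \<in> V" shows "\<exists>w\<in>leaves V E. \<exists>k. (v,w) \<in> E ^^ k"
proof (rule ccontr)
  assume na: "\<not> ?thesis"
  have ex: "\<exists>w. (v,w) \<in> E ^^ m" for m
  proof (induction m)
    case 0 then show ?case by auto
  next
    case (Suc m)
    then obtain w where w: "(v,w) \<in> E ^^ m" by blast
    then have wV: "w \<in> V" using path_V assms by blast
    have "w \<notin> leaves V E" using na w by blast
    then obtain c where "(w,c) \<in> E" using wV unfolding leaves_def children_def by auto
    then have "(v,c) \<in> E ^^ Suc m" using w by (rule relpow_Suc_I[rotated])
    then show ?case by blast
  qed
  obtain B where B: "\<forall>v w k. v \<in> V \<longrightarrow> (v,w) \<in> E ^^ k \<longrightarrow> k \<le> B" using path_bound by blast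
  obtain w where "(v,w) \<in> E ^^ Suc B" using ex by blast
  then have "Suc B \<le> B" using assms B by blast
  then show False by simp
qed

definition P where "P v = {k. \<exists>w\<in>leaves V E. (v,w) \<in> E ^^ k}"
abbreviation ht where "ht v \<equiv> height V E v"

lemma ht_P: "ht v = Max (P v)" unfolding height_def P_def by simp

lemma finP: "v \<in> V \<Longrightarrow> finite (P v)"
proof -
  assume v: "v \<in> V"
  obtain B where "\<forall>v w k. v \<in> V \<longrightarrow> (v,w) \<in> E ^^ k \<longrightarrow> k \<le> B" using path_bound by blast
  then have "P v \<subseteq> {..B}" unfolding P_def using v by auto
  then show ?thesis using finite_subset by blast
qed

lemma neP: "v \<in> V \<Longrightarrow> P v \<noteq> {}" using reach_leaf unfolding P_def by blast

lemma ht_in: "v \<in> V \<Longrightarrow> ht v \<in> P v" by (simp add: ht_P Max_in finP neP)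

lemma ht_leaf: assumes "v \<in> leaves V E" shows "ht v = 0"
proof -
  have nc: "(v,y) \<notin> E" for y using assms unfolding leaves_def children_def by blast
  have sub: "P v \<subseteq> {0}"
  proof
    fix k assume "k \<in> P v"
    then obtain w where w: "(v,w) \<in> E ^^ k" unfolding P_def by blast
    show "k \<in> {0}"
    proof (cases k)
      case (Suc k')
      then have "(v,w) \<in> E ^^ Suc k'" using w by simp
      then obtain y where "(v,y) \<in> E" by (rule relpow_Suc_E2)
      then show ?thesis using nc by blast
    qed simp
  qed
  have "0 \<in> P v" using assms unfolding P_def by (simp add: bexI[of _ v])
  then have "P v = {0}" using sub by blast
  then show ?thesis using ht_P by simp
qed

lemma ht_child: assumes "u \<in> V" "(u,c) \<in> E" shows "ht c < ht u"
proof -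
  have c: "c \<in> V" using assms EV by blast
  have "ht c \<in> P c" using ht_in[OF c] .
  then obtain w where w: "w \<in> leaves V E" "(c,w) \<in> E ^^ ht c" unfolding P_def by blast
  have "(u,w) \<in> E ^^ Suc (ht c)" using assms(2) w(2) by (rule relpow_Suc_I2)
  then have "Suc (ht c) \<in> P u" using w(1) unfolding P_def by blast
  then have "Suc (ht c) \<le> Max (P u)" using finP[OF assms(1)] by (rule Max_ge[rotated])
  then show ?thesis by (simp add: ht_P)
qed

lemma internal_child: "u \<in> V \<Longrightarrow> u \<notin> leaves V E \<Longrightarrow> \<exists>c. (u,c) \<in> E"
  unfolding leaves_def children_def by auto

lemma ht_pos: "u \<in> V \<Longrightarrow> u \<notin> leaves V E \<Longrightarrow> 0 < ht u"
  using internal_child ht_child by fastforce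

lemma ht0_iff: "u \<in> V \<Longrightarrow> ht u = 0 \<longleftrightarrow> u \<in> leaves V E"
  using ht_pos ht_leaf by fastforce

lemma ht_internal: assumes "u \<in> V" "u \<notin> leaves V E"
  shows "ht u = Suc (Max (ht ` children E u))"
proof -
  have ne: "children E u \<noteq> {}" using internal_child[OF assms] unfolding children_def by simp
  have f: "finite (ht ` children E u)" by (rule finite_imageI[OF fin_children])
  have ge: "Suc (Max (ht ` children E u)) \<le> ht u"
  proof -
    have "ht ` children E u \<noteq> {}" using ne by (simp only: image_is_empty not_False_eq_True)
    then have "Max (ht ` children E u) \<in> ht ` children E u" by (rule Max_in[OF f])
    then obtain c where c: "Max (ht ` children E u) = ht c" "c \<in> children E u" by (rule imageE)
    have "(u,c) \<in> E" using c(2) unfolding children_def by simp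
    then have "ht c < ht u" by (rule ht_child[OF assms(1)])
    then show ?thesis using c(1) by linarith
  qed
  have "ht u \<in> P u" using ht_in[OF assms(1)] .
  then obtain w where w: "w \<in> leaves V E" "(u,w) \<in> E ^^ ht u" unfolding P_def by blast
  obtain k where k: "ht u = Suc k" using ht_pos[OF assms] by (cases "ht u") auto
  have "(u,w) \<in> E ^^ Suc k" using w(2) unfolding k .
  then obtain c where c: "(u,c) \<in> E" "(c,w) \<in> E ^^ k" by (rule relpow_Suc_E2)
  have cV: "c \<in> V" using c EV by blast
  have "k \<in> P c" using c(2) w(1) unfolding P_def by blast
  then have "k \<le> Max (P c)" using finP[OF cV] by (rule Max_ge[rotated])
  then have kc: "k \<le> ht c" unfolding ht_P .
  have "c \<in> children E u" using c(1) unfolding children_def by simp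
  then have "ht c \<le> Max (ht ` children E u)" using f by (rule Max_ge[rotated, OF imageI])
  then show ?thesis using ge k kc by linarith
qed

end

context ptree
begin

definition key :: "('v \<Rightarrow> nat) \<Rightarrow> 'v \<Rightarrow> nat \<times> nat" where
  "key lo v = (ht v, if v \<in> leaves V E then lab v else Min (lo ` children E v))"

definition F :: "('v \<Rightarrow> nat) \<Rightarrow> 'v \<Rightarrow> nat" where
  "F lo v = (if v \<in> V then card {w\<in>V. key lo w \<le> key lo v} else 0)"

lemma fst_key: "fst (key lo v) = ht v" unfolding key_def by simp

lemma F_mono: assumes "v \<in> V" "w \<in> V" "key lo v \<le> key lo w" shows "F lo v \<le> F lo w"
proof -
  have "{u\<in>V. key lo u \<le> key lo v} \<subseteq> {u\<in>V. key lo u \<le> key lo w}" using assms by auto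
  then show ?thesis unfolding F_def using assms finV by (simp add: card_mono)
qed

lemma F_strict: assumes "v \<in> V" "w \<in> V" "key lo v < key lo w" shows "F lo v < F lo w"
proof -
  have s: "{u\<in>V. key lo u \<le> key lo v} \<subseteq> {u\<in>V. key lo u \<le> key lo w}" using assms(3) by auto
  have "\<not> key lo w \<le> key lo v" using assms(3) by (simp add: not_le)
  then have "w \<notin> {u\<in>V. key lo u \<le> key lo v}" by simp
  moreover have "w \<in> {u\<in>V. key lo u \<le> key lo w}" using assms(2) by simp
  ultimately have "{u\<in>V. key lo u \<le> key lo v} \<subset> {u\<in>V. key lo u \<le> key lo w}" using s by blast
  then show ?thesis unfolding F_def using assms finV by (simp add: psubset_card_mono)
qed

lemma F_ge1: "v \<in> V \<Longrightarrow> 1 \<le> F lo v"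
proof -
  assume v: "v \<in> V"
  then have "{u\<in>V. key lo u \<le> key lo v} \<noteq> {}" by auto
  then show ?thesis unfolding F_def using v finV by (simp add: Suc_leI card_gt_0_iff)
qed

lemma F_le: "F lo v \<le> card V"
  unfolding F_def using finV by (simp add: card_mono)

lemma key_cong: assumes "\<forall>c\<in>children E v. lo1 c = lo2 c" shows "key lo1 v = key lo2 v"
proof -
  have "lo1 ` children E v = lo2 ` children E v" by (rule image_cong[OF refl]) (use assms in blast)
  then show ?thesis unfolding key_def by simp
qed

lemma F_agree: assumes "\<forall>v\<in>V. ht v < h \<longrightarrow> lo1 v = lo2 v" "v \<in> V" "ht v < Suc h"
  shows "F lo1 v = F lo2 v"
proof -
  have kc: "key lo1 x = key lo2 x" if "x \<in> V" "ht x \<le> h" for x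
  proof (rule key_cong, intro ballI)
    fix c assume "c \<in> children E x"
    then have "c \<in> V" "ht c < ht x" using ht_child that children_sub unfolding children_def by auto
    then show "lo1 c = lo2 c" using assms(1) that by auto
  qed
  have kv: "key lo1 v = key lo2 v" using kc assms by simp
  have "{w\<in>V. key lo1 w \<le> key lo1 v} = {w\<in>V. key lo2 w \<le> key lo2 v}"
  proof (rule Collect_cong)
    fix w show "(w\<in>V \<and> key lo1 w \<le> key lo1 v) = (w\<in>V \<and> key lo2 w \<le> key lo2 v)"
    proof (cases "w \<in> V \<and> ht w \<le> h")
      case True then show ?thesis using kc kv by simp
    next
      case False
      have "\<not> key lo w \<le> key lo v" if "w \<in> V" for lo
      proof -
        have "ht v < ht w" using False that assms by simp
        then have "fst (key lo v) < fst (key lo w)" by (simp add: fst_key)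
        then have "key lo v < key lo w" by (simp add: less_prod_def)
        then show ?thesis by simp
      qed
      then show ?thesis by blast
    qed
  qed
  then show ?thesis unfolding F_def using assms by simp
qed

definition Hb where "Hb = Suc (Max (ht ` V))"

lemma ht_lt_Hb: "v \<in> V \<Longrightarrow> ht v < Hb"
  unfolding Hb_def using finV by (simp add: le_imp_less_Suc)

lemma iter_agree: "\<forall>v\<in>V. ht v < h \<longrightarrow> (F^^(h+j)) z v = (F^^h) z v"
proof (induction h arbitrary: j)
  case 0 then show ?case by simp
next
  case (Suc h)
  show ?case
  proof (intro ballI impI)
    fix v assume "v \<in> V" "ht v < Suc h"
    then have "F ((F^^(h+j)) z) v = F ((F^^h) z) v" using F_agree[OF Suc.IH[of j]] by blast
    then show "(F^^(Suc h+j)) z v = (F^^Suc h) z v" by simp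
  qed
qed

definition lostar where "lostar = (F^^Hb) (\<lambda>_. 0)"

lemma lostar_fix: "F lostar = lostar"
proof
  fix v
  show "F lostar v = lostar v"
  proof (cases "v \<in> V")
    case True
    have "(F^^(Hb+1)) (\<lambda>_. 0) v = (F^^Hb) (\<lambda>_. 0) v" using iter_agree[of Hb 1] True ht_lt_Hb by blast
    then show ?thesis unfolding lostar_def by simp
  next
    case False
    have "lostar = F ((F^^(Hb - 1)) (\<lambda>_. 0))" unfolding lostar_def Hb_def by simp
    then show ?thesis using False unfolding F_def by simp
  qed
qed

lemma fix_unique: assumes "F lo1 = lo1" "F lo2 = lo2" shows "lo1 = lo2"
proof -
  have "\<forall>v\<in>V. ht v < h \<longrightarrow> lo1 v = lo2 v" for h
  proof (induction h)
    case 0 then show ?case by simp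
  next
    case (Suc h)
    show ?case
    proof (intro ballI impI)
      fix v assume "v \<in> V" "ht v < Suc h"
      then have "F lo1 v = F lo2 v" using F_agree[OF Suc.IH] by blast
      then show "lo1 v = lo2 v" using assms by simp
    qed
  qed
  then have in_V: "v \<in> V \<Longrightarrow> lo1 v = lo2 v" for v using ht_lt_Hb by blast
  show ?thesis
  proof
    fix v show "lo1 v = lo2 v"
    proof (cases "v \<in> V")
      case True then show ?thesis using in_V by blast
    next
      case False
      then have "F lo1 v = 0" "F lo2 v = 0" unfolding F_def by auto
      then show ?thesis using assms by simp
    qed
  qed
qed

lemma fix_key_eq: assumes "F lo = lo" "v \<in> V" "w \<in> V" "lo v = lo w" shows "key lo v = key lo w"
proof (rule ccontr)
  assume "key lo v \<noteq> key lo w"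
  then have "key lo v < key lo w \<or> key lo w < key lo v" by auto
  then have "F lo v \<noteq> F lo w" using F_strict assms by (metis less_irrefl)
  then show False using assms by simp
qed

lemma fix_inj: assumes fx: "F lo = lo" shows "inj_on lo V"
proof -
  have "\<forall>v\<in>V. \<forall>w\<in>V. ht v < h \<longrightarrow> lo v = lo w \<longrightarrow> v = w" for h
  proof (induction h)
    case 0 then show ?case by simp
  next
    case (Suc h)
    show ?case
    proof (intro ballI impI)
      fix v w assume v: "v \<in> V" and w: "w \<in> V" and hv: "ht v < Suc h" and eq: "lo v = lo w"
      have k: "key lo v = key lo w" using fix_key_eq[OF fx v w eq] .
      then have hh: "ht v = ht w" using fst_key by metis
      show "v = w"
      proof (cases "v \<in> leaves V E")
        case True
        then have wl: "w \<in> leaves V E" using hh ht0_iff v w by metis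
        then have "lab v = lab w" using k True unfolding key_def by simp
        then show ?thesis using labbij True wl unfolding bij_betw_def inj_on_def by blast
      next
        case False
        then have wl: "w \<notin> leaves V E" using hh ht0_iff v w by metis
        have mm: "Min (lo ` children E v) = Min (lo ` children E w)" using k False wl unfolding key_def by simp
        have nev: "children E v \<noteq> {}" using internal_child[OF v False] unfolding children_def by blast
        have new: "children E w \<noteq> {}" using internal_child[OF w wl] unfolding children_def by blast
        have "Min (lo ` children E v) \<in> lo ` children E v" using nev fin_children by (simp add: Min_in)
        then obtain c where c0: "Min (lo ` children E v) = lo c" "c \<in> children E v" by (rule imageE)
        then have c: "c \<in> children E v" "lo c = Min (lo ` children E v)" by simp_all
        have "Min (lo ` children E w) \<in> lo ` children E w" using new fin_children by (simp add: Min_in)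
        then obtain c' where c0': "Min (lo ` children E w) = lo c'" "c' \<in> children E w" by (rule imageE)
        then have c': "c' \<in> children E w" "lo c' = Min (lo ` children E w)" by simp_all
        have cV: "c \<in> V" "c' \<in> V" using c c' children_sub by auto
        have "ht c < ht v" using c ht_child v unfolding children_def by blast
        then have "c = c'" using Suc.IH cV c c' mm hv by auto
        then show ?thesis using c c' uniq_parent unfolding children_def by blast
      qed
    qed
  qed
  then show ?thesis unfolding inj_on_def using ht_lt_Hb by blast
qed

end

context ptree
begin

lemma key_leaf: "v \<in> leaves V E \<Longrightarrow> key lo v = (0, lab v)"
  unfolding key_def using ht_leaf by simp

lemma key_int: "v \<in> V \<Longrightarrow> v \<notin> leaves V E \<Longrightarrow> key lo v = (ht v, Min (lo ` children E v))"
  unfolding key_def by simp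

lemma fix_bottom_up: assumes fx: "F lo = lo" shows "bottom_up V E lab lo"
proof -
  have inj: "inj_on lo V" using fix_inj[OF fx] .
  have img: "lo ` V \<subseteq> {1..card V}"
  proof
    fix x assume "x \<in> lo ` V"
    then obtain v where v: "x = lo v" "v \<in> V" by blast
    then have "1 \<le> F lo v" "F lo v \<le> card V" using F_ge1 F_le by auto
    then show "x \<in> {1..card V}" using v fx by simp
  qed
  have out: "\<forall>v. v \<notin> V \<longrightarrow> lo v = 0"
  proof (intro allI impI)
    fix v assume "v \<notin> V"
    then have "F lo v = 0" unfolding F_def by simp
    then show "lo v = 0" using fx by simp
  qed
  have lv: "\<forall>v\<in>leaves V E. lo v = lab v"
  proof
    fix v assume vl: "v \<in> leaves V E"
    have vV: "v \<in> V" using vl leaves_sub by blast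
    have kv: "key lo v = (0, lab v)" using key_leaf[OF vl] .
    define S where "S = {w\<in>V. key lo w \<le> key lo v}"
    have S: "S = {w\<in>leaves V E. lab w \<le> lab v}"
    proof (rule set_eqI, rule iffI)
      fix w assume "w \<in> S"
      then have wV: "w \<in> V" and le: "key lo w \<le> (0, lab v)" unfolding S_def using kv by auto
      have "fst (key lo w) \<le> 0" using le unfolding less_eq_prod_def by auto
      then have "ht w = 0" unfolding fst_key by simp
      then have wl: "w \<in> leaves V E" using ht0_iff wV by blast
      then have "key lo w = (0, lab w)" by (rule key_leaf)
      then show "w \<in> {w\<in>leaves V E. lab w \<le> lab v}" using le wl by simp
    next
      fix w assume "w \<in> {w\<in>leaves V E. lab w \<le> lab v}"
      then have wl: "w \<in> leaves V E" and le: "lab w \<le> lab v" by auto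
      have "key lo w = (0, lab w)" using wl by (rule key_leaf)
      then show "w \<in> S" unfolding S_def using kv le wl leaves_sub by auto
    qed
    have labinj: "inj_on lab S" using labbij unfolding S bij_betw_def inj_on_def by blast
    have labv: "lab v \<in> {1..n}" using labbij vl unfolding bij_betw_def by blast
    have "lab ` S = {1..lab v}"
    proof
      show "lab ` S \<subseteq> {1..lab v}" using labbij unfolding S bij_betw_def by auto
      show "{1..lab v} \<subseteq> lab ` S"
      proof
        fix x assume x: "x \<in> {1..lab v}"
        then have "x \<in> {1..n}" using labv by auto
        then have "x \<in> lab ` leaves V E" using labbij unfolding bij_betw_def by simp
        then obtain w where "w \<in> leaves V E" "x = lab w" by blast
        then show "x \<in> lab ` S" unfolding S using x by auto
      qed
    qed
    then have "card S = lab v" using card_image[OF labinj] by simp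
    have "lo v = F lo v" using fx by simp
    also have "\<dots> = card S" unfolding F_def S_def using vV by simp
    finally show "lo v = lab v" using \<open>card S = lab v\<close> by simp
  qed
  have b: "\<forall>u\<in>V. \<forall>v\<in>V. ht u < ht v \<longrightarrow> lo u < lo v"
  proof (intro ballI impI)
    fix u v assume uv: "u \<in> V" "v \<in> V" "ht u < ht v"
    then have "key lo u < key lo v" by (simp add: less_prod_def fst_key)
    then have "F lo u < F lo v" using F_strict uv by blast
    then show "lo u < lo v" using fx by simp
  qed
  have c: "\<forall>u\<in>V. \<forall>v\<in>V. 0 < ht u \<and> ht u = ht v \<and>
         Min (lo ` children E u) < Min (lo ` children E v) \<longrightarrow> lo u < lo v"
  proof (intro ballI impI)
    fix u v assume uv: "u \<in> V" "v \<in> V" and h: "0 < ht u \<and> ht u = ht v \<and>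
         Min (lo ` children E u) < Min (lo ` children E v)"
    have ul: "u \<notin> leaves V E" using h ht0_iff[OF uv(1)] by auto
    have vl: "v \<notin> leaves V E" using h ht0_iff[OF uv(2)] by auto
    have "key lo u < key lo v" using key_int[OF uv(1) ul] key_int[OF uv(2) vl] h by simp
    then have "F lo u < F lo v" using F_strict uv by blast
    then show "lo u < lo v" using fx by simp
  qed
  show ?thesis unfolding bottom_up_def using inj img out lv b c by blast
qed

lemma bottom_up_fix: assumes bu: "bottom_up V E lab lo" shows "F lo = lo"
proof
  fix v
  have inj: "inj_on lo V" and img: "lo ` V \<subseteq> {1..card V}" and out: "\<forall>v. v \<notin> V \<longrightarrow> lo v = 0"
    and lv: "\<forall>v\<in>leaves V E. lo v = lab v"
    and b: "\<forall>u\<in>V. \<forall>v\<in>V. ht u < ht v \<longrightarrow> lo u < lo v"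
    and c: "\<forall>u\<in>V. \<forall>v\<in>V. 0 < ht u \<and> ht u = ht v \<and>
         Min (lo ` children E u) < Min (lo ` children E v) \<longrightarrow> lo u < lo v"
    using bu unfolding bottom_up_def by blast+
  have imgeq: "lo ` V = {1..card V}"
    using card_image[OF inj] img finV by (simp add: card_subset_eq)
  have key_lt: "lo w < lo u" if "w \<in> V" "u \<in> V" "key lo w < key lo u" for w u
  proof -
    have "ht w < ht u \<or> (ht w = ht u \<and> snd (key lo w) < snd (key lo u))"
      using that(3) unfolding less_prod_def' fst_key by simp
    then show ?thesis
    proof
      assume "ht w < ht u" then show ?thesis using b that by blast
    next
      assume h: "ht w = ht u \<and> snd (key lo w) < snd (key lo u)"
      show ?thesis
      proof (cases "ht u = 0")
        case True
        then have "w \<in> leaves V E" "u \<in> leaves V E" using h ht0_iff[OF that(1)] ht0_iff[OF that(2)] by auto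
        then show ?thesis using h lv unfolding key_def by simp
      next
        case False
        then have "w \<notin> leaves V E" "u \<notin> leaves V E" using h ht0_iff[OF that(1)] ht0_iff[OF that(2)] by auto
        then show ?thesis using h c that False unfolding key_def by simp
      qed
    qed
  qed
  have key_eq: "w = u" if "w \<in> V" "u \<in> V" "key lo w = key lo u" for w u
  proof -
    have hh: "ht w = ht u" using arg_cong[OF that(3), of fst] unfolding fst_key .
    show ?thesis
    proof (cases "u \<in> leaves V E")
      case True
      then have wl: "w \<in> leaves V E" using hh ht0_iff[OF that(1)] ht0_iff[OF that(2)] by simp
      then have "lab w = lab u" using that(3) True unfolding key_def by simp
      then show ?thesis using labbij True wl unfolding bij_betw_def inj_on_def by blast
    next
      case False
      then have wl: "w \<notin> leaves V E" using hh ht0_iff[OF that(1)] ht0_iff[OF that(2)] by simp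
      have mm: "Min (lo ` children E w) = Min (lo ` children E u)" using that(3) False wl unfolding key_def by simp
      have nev: "children E w \<noteq> {}" using internal_child[OF that(1) wl] unfolding children_def by simp
      have new: "children E u \<noteq> {}" using internal_child[OF that(2) False] unfolding children_def by simp
      have "lo ` children E w \<noteq> {}" using nev by (simp only: image_is_empty not_False_eq_True)
      then have "Min (lo ` children E w) \<in> lo ` children E w" by (rule Min_in[OF finite_imageI[OF fin_children]])
      then obtain c where c: "Min (lo ` children E w) = lo c" "c \<in> children E w" by (rule imageE)
      have "lo ` children E u \<noteq> {}" using new by (simp only: image_is_empty not_False_eq_True)
      then have "Min (lo ` children E u) \<in> lo ` children E u" by (rule Min_in[OF finite_imageI[OF fin_children]])
      then obtain c' where c': "Min (lo ` children E u) = lo c'" "c' \<in> children E u" by (rule imageE)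
      have "c \<in> V" "c' \<in> V" using c c' children_sub by auto
      moreover have "lo c = lo c'" using c(1) c'(1) mm by simp
      ultimately have "c = c'" using inj unfolding inj_on_def by blast
      then show ?thesis using c c' uniq_parent unfolding children_def by blast
    qed
  qed
  show "F lo v = lo v"
  proof (cases "v \<in> V")
    case False then show ?thesis using out unfolding F_def by simp
  next
    case vV: True
    have S: "{w\<in>V. key lo w \<le> key lo v} = {w\<in>V. lo w \<le> lo v}"
    proof (rule Collect_cong, rule iffI)
      fix w assume "w \<in> V \<and> key lo w \<le> key lo v"
      then have wV: "w \<in> V" and kl: "key lo w < key lo v \<or> key lo w = key lo v" by auto
      from kl show "w \<in> V \<and> lo w \<le> lo v"
      proof
        assume "key lo w < key lo v" then have "lo w < lo v" using key_lt wV vV by blast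
        then show ?thesis using wV by simp
      next
        assume "key lo w = key lo v" then have "w = v" using key_eq wV vV by blast
        then show ?thesis using wV by simp
      qed
    next
      fix w assume "w \<in> V \<and> lo w \<le> lo v"
      then have wV: "w \<in> V" and le: "lo w \<le> lo v" by auto
      have "\<not> key lo v < key lo w"
      proof
        assume "key lo v < key lo w" then have "lo v < lo w" using key_lt wV vV by blast
        then show False using le by simp
      qed
      then show "w \<in> V \<and> key lo w \<le> key lo v" using wV by (simp add: not_less)
    qed
    have lvN: "lo v \<in> {1..card V}" using imgeq vV by blast
    have "lo ` {w\<in>V. lo w \<le> lo v} = {1..lo v}"
    proof
      show "lo ` {w\<in>V. lo w \<le> lo v} \<subseteq> {1..lo v}" using img by auto
      show "{1..lo v} \<subseteq> lo ` {w\<in>V. lo w \<le> lo v}"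
      proof
        fix x assume x: "x \<in> {1..lo v}"
        then have "x \<in> lo ` V" using imgeq lvN by auto
        then obtain w where "w \<in> V" "x = lo w" by blast
        then show "x \<in> lo ` {w\<in>V. lo w \<le> lo v}" using x by auto
      qed
    qed
    moreover have "inj_on lo {w\<in>V. lo w \<le> lo v}" using inj by (rule inj_on_subset) auto
    ultimately have "card {w\<in>V. lo w \<le> lo v} = lo v" using card_image[of lo "{w\<in>V. lo w \<le> lo v}"] by simp
    then show ?thesis using vV S unfolding F_def by simp
  qed
qed

lemma bo_eq: "bottom_up_ordering V E lab = lostar"
  unfolding bottom_up_ordering_def
proof (rule the_equality)
  show "bottom_up V E lab lostar" using fix_bottom_up[OF lostar_fix] .
  fix lo assume "bottom_up V E lab lo"
  then have "F lo = lo" by (rule bottom_up_fix)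
  then show "lo = lostar" using fix_unique lostar_fix by blast
qed

end

context ptree
begin

definition bo where "bo = bottom_up_ordering V E lab"
definition NN where "NN = card V"
definition g where "g k = inv_into V bo k"
definition Bk where "Bk k = bo ` children E (g k)"
definition hk where "hk k = (if k \<le> n then 0 else ht (g k))"

lemma bo_fix: "F bo = bo" unfolding bo_def bo_eq by (rule lostar_fix)
lemma bo_bu: "bottom_up V E lab bo" unfolding bo_def bo_eq by (rule fix_bottom_up[OF lostar_fix])

lemma bo_inj: "inj_on bo V" using bo_bu unfolding bottom_up_def by blast
lemma bo_img: "bo ` V = {1..NN}"
proof -
  have "bo ` V \<subseteq> {1..card V}" using bo_bu unfolding bottom_up_def by blast
  then show ?thesis using card_image[OF bo_inj] finV unfolding NN_def by (simp add: card_subset_eq)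
qed
lemma bo_leaf: "v \<in> leaves V E \<Longrightarrow> bo v = lab v" using bo_bu unfolding bottom_up_def by blast
lemma bo_b: "u \<in> V \<Longrightarrow> v \<in> V \<Longrightarrow> ht u < ht v \<Longrightarrow> bo u < bo v" using bo_bu unfolding bottom_up_def by blast

lemma leaves_img: "bo ` leaves V E = {1..n}"
proof -
  have "bo ` leaves V E = lab ` leaves V E" using bo_leaf by (rule image_cong[OF refl])
  then show ?thesis using labbij unfolding bij_betw_def by simp
qed

lemma bo_int: assumes "v \<in> V" "v \<notin> leaves V E" shows "n < bo v"
proof -
  have "bo v \<notin> bo ` leaves V E"
  proof
    assume "bo v \<in> bo ` leaves V E"
    then obtain w where "w \<in> leaves V E" "bo v = bo w" by blast
    then show False using bo_inj assms leaves_sub unfolding inj_on_def by blast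
  qed
  then have "bo v \<notin> {1..n}" using leaves_img by simp
  moreover have "bo v \<in> {1..NN}" using bo_img assms by blast
  ultimately show ?thesis by auto
qed

lemma bo_leaf_le: "v \<in> leaves V E \<Longrightarrow> bo v \<le> n" using leaves_img by auto

lemma n_le: "n \<le> NN"
proof -
  have "card (leaves V E) = n" using bij_betw_same_card[OF labbij] by simp
  moreover have "card (leaves V E) \<le> card V" using leaves_sub finV by (rule card_mono[rotated])
  ultimately show ?thesis unfolding NN_def by simp
qed

lemma g_in: "k \<in> {1..NN} \<Longrightarrow> g k \<in> V \<and> bo (g k) = k"
  unfolding g_def using bo_img by (metis f_inv_into_f inv_into_into)

lemma g_bo: assumes "v \<in> V" shows "g (bo v) = v" unfolding g_def by (rule inv_into_f_f[OF bo_inj assms])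

lemma g_int: assumes "k \<in> {n<..NN}" shows "g k \<in> V" "bo (g k) = k" "g k \<notin> leaves V E"
proof -
  have k: "k \<in> {1..NN}" using assms by auto
  show "g k \<in> V" "bo (g k) = k" using g_in[OF k] by auto
  show "g k \<notin> leaves V E" using bo_leaf_le \<open>bo (g k) = k\<close> assms by fastforce
qed

lemma hk_bo: assumes "v \<in> V" shows "hk (bo v) = ht v"
proof (cases "bo v \<le> n")
  case True
  then have "v \<in> leaves V E" using bo_int assms by fastforce
  then show ?thesis using True ht_leaf unfolding hk_def by simp
next
  case False then show ?thesis unfolding hk_def using g_bo[OF assms] by simp
qed

lemma A1: "k \<in> {n<..NN} \<Longrightarrow> finite (Bk k) \<and> Bk k \<noteq> {} \<and> (\<forall>x\<in>Bk k. x < k)"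
proof -
  assume k: "k \<in> {n<..NN}"
  note gk = g_int[OF k]
  have "finite (Bk k)" unfolding Bk_def by (rule finite_imageI[OF fin_children])
  moreover have "Bk k \<noteq> {}"
  proof -
    obtain c where "(g k, c) \<in> E" using internal_child gk by blast
    then show ?thesis unfolding Bk_def children_def by blast
  qed
  moreover have "\<forall>x\<in>Bk k. x < k"
  proof
    fix x assume "x \<in> Bk k"
    then obtain c where c: "c \<in> children E (g k)" "x = bo c" unfolding Bk_def by blast
    have e: "(g k, c) \<in> E" using c(1) unfolding children_def by simp
    have "c \<in> V" using c(1) children_sub by blast
    moreover have "ht c < ht (g k)" using ht_child[OF gk(1) e] .
    ultimately have "bo c < bo (g k)" using bo_b gk(1) by blast
    then show "x < k" using c gk by simp
  qed
  ultimately show ?thesis by blast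
qed

lemma A4: assumes k: "k \<in> {n<..NN}" shows "hk k = Suc (Max (hk ` Bk k))"
proof -
  note gk = g_int[OF k]
  have "hk ` Bk k = (\<lambda>c. hk (bo c)) ` children E (g k)" unfolding Bk_def by (simp add: image_image)
  also have "\<dots> = ht ` children E (g k)"
    by (rule image_cong[OF refl]) (use hk_bo children_sub in blast)
  finally have "hk ` Bk k = ht ` children E (g k)" .
  moreover have "hk k = ht (g k)" unfolding hk_def using k by simp
  ultimately show ?thesis using ht_internal[OF gk(1) gk(3)] by simp
qed

lemma A8: "k \<le> n \<Longrightarrow> hk k = 0" unfolding hk_def by simp

lemma A5: "inj_on Bk {n<..NN}"
proof
  fix k k' assume k: "k \<in> {n<..NN}" and k': "k' \<in> {n<..NN}" and eq: "Bk k = Bk k'"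
  have "Bk k \<noteq> {}" using A1[OF k] by blast
  then obtain x where x: "x \<in> Bk k" by blast
  then obtain c where c: "c \<in> children E (g k)" "x = bo c" unfolding Bk_def by blast
  have "x \<in> Bk k'" using x eq by simp
  then obtain c' where c': "c' \<in> children E (g k')" "x = bo c'" unfolding Bk_def by blast
  have "c \<in> V" "c' \<in> V" using c c' children_sub by auto
  then have "c = c'" using bo_inj c c' unfolding inj_on_def by auto
  then have "g k = g k'" using c c' uniq_parent unfolding children_def by blast
  then show "k = k'" using g_int(2)[OF k] g_int(2)[OF k'] by metis
qed

lemma A6: "matching_rep V E lab = Bk ` {n<..NN}"
proof -
  have "matching_rep V E lab = {bo ` children E u | u. u \<in> V - leaves V E}"
    unfolding matching_rep_def bo_def Let_def by simp
  also have "\<dots> = Bk ` {n<..NN}"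
  proof
    show "{bo ` children E u | u. u \<in> V - leaves V E} \<subseteq> Bk ` {n<..NN}"
    proof
      fix X assume "X \<in> {bo ` children E u | u. u \<in> V - leaves V E}"
      then obtain u where u: "u \<in> V" "u \<notin> leaves V E" "X = bo ` children E u" by blast
      have "bo u \<in> {n<..NN}" using bo_int[OF u(1,2)] bo_img u(1) by auto
      moreover have "Bk (bo u) = X" unfolding Bk_def using g_bo[OF u(1)] u(3) by simp
      ultimately show "X \<in> Bk ` {n<..NN}" by blast
    qed
    show "Bk ` {n<..NN} \<subseteq> {bo ` children E u | u. u \<in> V - leaves V E}"
    proof
      fix X assume "X \<in> Bk ` {n<..NN}"
      then obtain k where k: "k \<in> {n<..NN}" "X = Bk k" by blast
      note gk = g_int[OF k(1)]
      show "X \<in> {bo ` children E u | u. u \<in> V - leaves V E}"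
        unfolding k(2) Bk_def using gk by blast
    qed
  qed
  finally show ?thesis .
qed

lemma A7: assumes k: "k \<in> {n<..NN}" and k': "k' \<in> {n<..NN}" and lt: "k < k'"
  shows "(hk k, Min (Bk k)) < (hk k', Min (Bk k'))"
proof -
  note gk = g_int[OF k] and gk' = g_int[OF k']
  have e1: "key bo (g k) = (hk k, Min (Bk k))"
    using key_int[OF gk(1) gk(3)] k unfolding hk_def Bk_def by simp
  have e2: "key bo (g k') = (hk k', Min (Bk k'))"
    using key_int[OF gk'(1) gk'(3)] k' unfolding hk_def Bk_def by simp
  have "\<not> key bo (g k') \<le> key bo (g k)"
  proof
    assume "key bo (g k') \<le> key bo (g k)"
    then have "F bo (g k') \<le> F bo (g k)" using F_mono gk(1) gk'(1) by blast
    then have "k' \<le> k" using bo_fix gk(2) gk'(2) by simp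
    then show False using lt by simp
  qed
  then show ?thesis using e1 e2 by (simp add: not_le)
qed

end

lemma recon:
  fixes B1 B2 :: "nat \<Rightarrow> nat set" and h1 h2 :: "nat \<Rightarrow> nat" and n N :: nat
  assumes fin1: "\<And>k. k \<in> {n<..N} \<Longrightarrow> finite (B1 k) \<and> B1 k \<noteq> {} \<and> (\<forall>x\<in>B1 k. x < k)"
    and fin2: "\<And>k. k \<in> {n<..N} \<Longrightarrow> finite (B2 k) \<and> B2 k \<noteq> {} \<and> (\<forall>x\<in>B2 k. x < k)"
    and h01: "\<And>k. k \<le> n \<Longrightarrow> h1 k = 0" and h02: "\<And>k. k \<le> n \<Longrightarrow> h2 k = 0"
    and hs1: "\<And>k. k \<in> {n<..N} \<Longrightarrow> h1 k = Suc (Max (h1 ` B1 k))"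
    and hs2: "\<And>k. k \<in> {n<..N} \<Longrightarrow> h2 k = Suc (Max (h2 ` B2 k))"
    and inj1: "inj_on B1 {n<..N}" and inj2: "inj_on B2 {n<..N}"
    and M: "B1 ` {n<..N} = B2 ` {n<..N}"
    and ord1: "\<And>k k'. k \<in> {n<..N} \<Longrightarrow> k' \<in> {n<..N} \<Longrightarrow> k < k' \<Longrightarrow> (h1 k, Min (B1 k)) < (h1 k', Min (B1 k'))"
    and ord2: "\<And>k k'. k \<in> {n<..N} \<Longrightarrow> k' \<in> {n<..N} \<Longrightarrow> k < k' \<Longrightarrow> (h2 k, Min (B2 k)) < (h2 k', Min (B2 k'))"
  shows "\<forall>k\<in>{n<..N}. B1 k = B2 k"
proof -
  have main: "k \<le> N \<longrightarrow> (n < k \<longrightarrow> B1 k = B2 k) \<and> h1 k = h2 k" for k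
  proof (induction k rule: less_induct)
    case (less k)
    show ?case
    proof (intro impI)
      assume kN: "k \<le> N"
      show "(n < k \<longrightarrow> B1 k = B2 k) \<and> h1 k = h2 k"
      proof (cases "n < k")
        case False then show ?thesis using h01 h02 by simp
      next
        case True
        then have kin: "k \<in> {n<..N}" using kN by simp
        have hB1: "h1 x = h2 x" if "x \<in> B1 k" for x
        proof -
          have "x < k" using fin1[OF kin] that by blast
          then show ?thesis using less.IH kN by simp
        qed
        have hB2: "h1 x = h2 x" if "x \<in> B2 k" for x
        proof -
          have "x < k" using fin2[OF kin] that by blast
          then show ?thesis using less.IH kN by simp
        qed
        have im1: "h2 ` B1 k = h1 ` B1 k" by (rule image_cong[OF refl]) (use hB1 in simp)
        have im2: "h2 ` B2 k = h1 ` B2 k" by (rule image_cong[OF refl]) (use hB2 in simp)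
        have Beq: "B1 k = B2 k"
        proof (rule ccontr)
          assume ne: "B1 k \<noteq> B2 k"
          have "B1 k \<in> B2 ` {n<..N}" using M kin by blast
          then obtain j where j: "j \<in> {n<..N}" "B1 k = B2 j" by blast
          have "B2 k \<in> B1 ` {n<..N}" using M kin by blast
          then obtain i where i: "i \<in> {n<..N}" "B2 k = B1 i" by blast
          have jk: "k < j"
          proof (rule ccontr)
            assume "\<not> k < j"
            then have "j < k \<or> j = k" by auto
            then show False
            proof
              assume "j < k"
              then have "B1 j = B2 j" using less.IH j(1) by simp
              then have "B1 k = B1 j" using j by simp
              then have "k = j" using inj1 kin j(1) unfolding inj_on_def by blast
              then show False using \<open>j < k\<close> by simp
            next
              assume "j = k" then show False using ne j by simp
            qed
          qed
          have ik: "k < i"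
          proof (rule ccontr)
            assume "\<not> k < i"
            then have "i < k \<or> i = k" by auto
            then show False
            proof
              assume "i < k"
              then have "B1 i = B2 i" using less.IH i(1) by simp
              then have "B2 k = B2 i" using i by simp
              then have "k = i" using inj2 kin i(1) unfolding inj_on_def by blast
              then show False using \<open>i < k\<close> by simp
            next
              assume "i = k" then show False using ne i by simp
            qed
          qed
          have hj: "h2 j = h1 k"
          proof -
            have "h2 j = Suc (Max (h2 ` B2 j))" using hs2[OF j(1)] .
            also have "\<dots> = Suc (Max (h2 ` B1 k))" using j(2) by simp
            also have "\<dots> = Suc (Max (h1 ` B1 k))" using im1 by simp
            also have "\<dots> = h1 k" using hs1[OF kin] by simp
            finally show ?thesis .
          qed
          have hi: "h1 i = h2 k"
          proof -
            have "h1 i = Suc (Max (h1 ` B1 i))" using hs1[OF i(1)] .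
            also have "\<dots> = Suc (Max (h1 ` B2 k))" using i(2) by simp
            also have "\<dots> = Suc (Max (h2 ` B2 k))" using im2 by simp
            also have "\<dots> = h2 k" using hs2[OF kin] by simp
            finally show ?thesis .
          qed
          have o1: "(h1 k, Min (B1 k)) < (h2 k, Min (B2 k))"
            using ord1[OF kin i(1) ik] hi i(2) by simp
          have o2: "(h2 k, Min (B2 k)) < (h1 k, Min (B1 k))"
            using ord2[OF kin j(1) jk] hj j(2) by simp
          show False using o1 o2 by (simp only: less_asym)
        qed
        have "h1 k = Suc (Max (h1 ` B1 k))" using hs1[OF kin] .
        also have "\<dots> = Suc (Max (h2 ` B2 k))" using Beq im2 by simp
        also have "\<dots> = h2 k" using hs2[OF kin] by simp
        finally show ?thesis using Beq by simp
      qed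
    qed
  qed
  show ?thesis using main by simp
qed


theorem corollary2:
  fixes V1 :: "'a set" and E1 :: "('a \<times> 'a) set" and lab1 :: "'a \<Rightarrow> nat"
    and V2 :: "'b set" and E2 :: "('b \<times> 'b) set" and lab2 :: "'b \<Rightarrow> nat"
    and n :: nat
  assumes "phylo_tree n V1 E1 lab1"
    and "phylo_tree n V2 E2 lab2"
    and "matching_rep V1 E1 lab1 = matching_rep V2 E2 lab2"
  shows "phylo_iso V1 E1 lab1 V2 E2 lab2"
proof -
  interpret T1: ptree n V1 E1 lab1 using assms(1) by unfold_locales
  interpret T2: ptree n V2 E2 lab2 using assms(2) by unfold_locales
  have M: "T1.Bk ` {n<..T1.NN} = T2.Bk ` {n<..T2.NN}" using T1.A6 T2.A6 assms(3) by simp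
  have c1: "card (T1.Bk ` {n<..T1.NN}) = T1.NN - n" using card_image[OF T1.A5] by simp
  have c2: "card (T2.Bk ` {n<..T2.NN}) = T2.NN - n" using card_image[OF T2.A5] by simp
  have NN: "T2.NN = T1.NN" using c1 c2 M T1.n_le T2.n_le by simp
  define N where "N = T1.NN"
  have N1: "T1.NN = N" and N2: "T2.NN = N" using NN unfolding N_def by simp_all
  have Beq: "\<forall>k\<in>{n<..N}. T1.Bk k = T2.Bk k"
  proof (rule recon)
    show "\<And>k. k \<in> {n<..N} \<Longrightarrow> finite (T1.Bk k) \<and> T1.Bk k \<noteq> {} \<and> (\<forall>x\<in>T1.Bk k. x < k)"
      using T1.A1 unfolding N1 .
    show "\<And>k. k \<in> {n<..N} \<Longrightarrow> finite (T2.Bk k) \<and> T2.Bk k \<noteq> {} \<and> (\<forall>x\<in>T2.Bk k. x < k)"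
      using T2.A1 unfolding N2 .
    show "\<And>k. k \<le> n \<Longrightarrow> T1.hk k = 0" by (rule T1.A8)
    show "\<And>k. k \<le> n \<Longrightarrow> T2.hk k = 0" by (rule T2.A8)
    show "\<And>k. k \<in> {n<..N} \<Longrightarrow> T1.hk k = Suc (Max (T1.hk ` T1.Bk k))" using T1.A4 unfolding N1 .
    show "\<And>k. k \<in> {n<..N} \<Longrightarrow> T2.hk k = Suc (Max (T2.hk ` T2.Bk k))" using T2.A4 unfolding N2 .
    show "inj_on T1.Bk {n<..N}" using T1.A5 unfolding N1 .
    show "inj_on T2.Bk {n<..N}" using T2.A5 unfolding N2 .
    show "T1.Bk ` {n<..N} = T2.Bk ` {n<..N}" using M unfolding N1 N2 .
    show "\<And>k k'. k \<in> {n<..N} \<Longrightarrow> k' \<in> {n<..N} \<Longrightarrow> k < k' \<Longrightarrow> (T1.hk k, Min (T1.Bk k)) < (T1.hk k', Min (T1.Bk k'))"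
      using T1.A7 unfolding N1 .
    show "\<And>k k'. k \<in> {n<..N} \<Longrightarrow> k' \<in> {n<..N} \<Longrightarrow> k < k' \<Longrightarrow> (T2.hk k, Min (T2.Bk k)) < (T2.hk k', Min (T2.Bk k'))"
      using T2.A7 unfolding N2 .
  qed
  define f where "f = T2.g \<circ> T1.bo"
  have b1: "bij_betw T1.bo V1 {1..N}" using T1.bo_inj T1.bo_img unfolding bij_betw_def N1 by simp
  have b2': "bij_betw T2.bo V2 {1..N}" using T2.bo_inj T2.bo_img unfolding bij_betw_def N2 by simp
  have b2: "bij_betw T2.g {1..N} V2"
  proof -
    have "bij_betw (inv_into V2 T2.bo) {1..N} V2" by (rule bij_betw_inv_into[OF b2'])
    moreover have "inv_into V2 T2.bo = T2.g" unfolding T2.g_def[abs_def] ..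
    ultimately show ?thesis by simp
  qed
  have bij: "bij_betw f V1 V2" unfolding f_def by (rule bij_betw_trans[OF b1 b2])
  have fV: "f v \<in> V2" and fbo: "T2.bo (f v) = T1.bo v" if "v \<in> V1" for v
  proof -
    have "T1.bo v \<in> T1.bo ` V1" using that by (rule imageI)
    then have "T1.bo v \<in> {1..T2.NN}" unfolding T1.bo_img N1 N2 .
    then show "f v \<in> V2" "T2.bo (f v) = T1.bo v" using T2.g_in unfolding f_def by auto
  qed
  have leafmap: "f v \<in> leaves V2 E2" if "v \<in> V1" "T1.bo v \<le> n" for v
  proof (rule ccontr)
    assume "f v \<notin> leaves V2 E2"
    then have "n < T2.bo (f v)" using T2.bo_int fV[OF that(1)] by blast
    then show False using fbo[OF that(1)] that(2) by simp
  qed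
  have edges: "(u, v) \<in> E1 \<longleftrightarrow> (f u, f v) \<in> E2" if u: "u \<in> V1" and v: "v \<in> V1" for u v
  proof (cases "u \<in> leaves V1 E1")
    case True
    have l: "(u, v) \<notin> E1" using True unfolding leaves_def children_def by blast
    have "f u \<in> leaves V2 E2" using leafmap[OF u] T1.bo_leaf_le[OF True] by blast
    then have r: "(f u, f v) \<notin> E2" unfolding leaves_def children_def by blast
    show ?thesis using l r by blast
  next
    case False
    define k where "k = T1.bo u"
    have kin: "k \<in> {n<..N}" using T1.bo_int[OF u False] T1.bo_img u N1 unfolding k_def by auto
    have gk1: "T1.g k = u" unfolding k_def by (rule T1.g_bo[OF u])
    have gk2: "T2.g k = f u" unfolding k_def f_def by simp
    have "(u, v) \<in> E1 \<longleftrightarrow> v \<in> children E1 u" unfolding children_def by simp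
    also have "\<dots> \<longleftrightarrow> T1.bo v \<in> T1.bo ` children E1 u"
      using inj_on_image_mem_iff[OF T1.bo_inj v T1.children_sub] by simp
    also have "\<dots> \<longleftrightarrow> T1.bo v \<in> T1.Bk k" unfolding T1.Bk_def gk1 ..
    also have "\<dots> \<longleftrightarrow> T1.bo v \<in> T2.Bk k" using Beq kin by simp
    also have "\<dots> \<longleftrightarrow> T2.bo (f v) \<in> T2.bo ` children E2 (f u)" unfolding T2.Bk_def gk2 fbo[OF v] ..
    also have "\<dots> \<longleftrightarrow> f v \<in> children E2 (f u)"
      using inj_on_image_mem_iff[OF T2.bo_inj fV[OF v] T2.children_sub] by simp
    also have "\<dots> \<longleftrightarrow> (f u, f v) \<in> E2" unfolding children_def by simp
    finally show ?thesis .
  qed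
  have labs: "lab2 (f v) = lab1 v" if vl: "v \<in> leaves V1 E1" for v
  proof -
    have vV: "v \<in> V1" using vl T1.leaves_sub by blast
    have fl: "f v \<in> leaves V2 E2" using leafmap[OF vV] T1.bo_leaf_le[OF vl] by blast
    have "lab2 (f v) = T2.bo (f v)" using T2.bo_leaf[OF fl] by simp
    also have "\<dots> = T1.bo v" using fbo[OF vV] .
    also have "\<dots> = lab1 v" using T1.bo_leaf[OF vl] .
    finally show ?thesis .
  qed
  show ?thesis unfolding phylo_iso_def using bij edges labs by blast
qed

end
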